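(* Let $\Omega=(0,L)^2$ with periodic boundary conditions, $M$ a positive integer, $h=L/M$, and let $\mathbb{V}_h\cong\mathbb{R}^{M^2}$ be the space of real grid functions on the periodic grid $\{(ih,jh):1\le i,j\le M\}$. Let $\Lambda_h$ be the standard five-point central-difference matrix of the Laplacian with periodic boundary conditions, and $\varepsilon>0$. Let $\tau_k>0$ ($k\ge1$) be time steps, $t_k=\sum_{j\le k}\tau_j$, $t_0=0$, with step ratios $r_k=\tau_k/\tau_{k-1}$ for $k\ge2$ and $r_1:=0$. Let $u^n\in\mathbb{V}_h$ solve $$D_2u^n=\varepsilon^2\Lambda_hu^n-f(u^n),\qquad n\ge1,$$ where $f(u)=u^{3}-u$ componentwise, $D_2u^1=(u^1-u^0)/\tau_1$ and, for $n\ge2$, $D_2u^n=\frac{1+2r_n}{\tau_n(1+r_n)}(u^n-u^{n-1})-\frac{r_n^2}{\tau_n(1+r_n)}(u^{n-1}-u^{n-2})$. Assume $$0<r_k<\frac{3+\sqrt{17}}{2}\quad\text{for } 2\le k\le N,$$ and $$\tau_k\le\min\Big\{\frac{1+2r_k}{1+r_k},\ \frac{2+4r_k-r_k^2}{1+r_k}-\frac{r_{k+1}}{1+r_{k+1}}\Big\}\quad\text{for } k\ge1.$$ Define, for $k\ge0$, $$E[u^k]=-\frac{\varepsilon^2}{2}(u^k)^T\Lambda_hu^k+\frac14\sum_{i}\big(1-(u_i^k)^2\big)^2,$$ and the modified energy $\widehat E[u^0]=E[u^0]$ and, for $k\ge1$, $$\widehat E[u^k]=E[u^k]+\frac{r_{k+1}\tau_k}{2(1+r_{k+1})}\sum_i\Big(\frac{u_i^k-u_i^{k-1}}{\tau_k}\Big)^2,$$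 where sums run over all components (grid points). Then $\widehat E[u^k]\le\widehat E[u^{k-1}]$ for all $k\ge1$.
   Context: Nonlinear operations on vectors are componentwise. The ratios $r_{k+1}$ appearing in the step condition and modified energy refer to the (positive) ratio of the next step to the current step. *)

theory Defs
  imports Complex_Main
begin

text \<open>Periodic grid with M x M points, indexed by (i,j) with 0 <= i,j < M
  (the paper's index i in 1..M corresponds to i mod M). Grid functions are
  maps nat \<times> nat \<Rightarrow> real, of which only the values on the grid matter.\<close>

definition grid :: "nat \<Rightarrow> (nat \<times> nat) set" where
  "grid M = {0..<M} \<times> {0..<M}"

definition lap_h :: "real \<Rightarrow> nat \<Rightarrow> (nat \<times> nat \<Rightarrow> real) \<Rightarrow> nat \<times> nat \<Rightarrow> real" where
  "lap_h L M u p = (let h = L / real M; i = fst p; j = snd p in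
     (u ((i + 1) mod M, j) + u ((i + M - 1) mod M, j)
      + u (i, (j + 1) mod M) + u (i, (j + M - 1) mod M) - 4 * u (i, j)) / h\<^sup>2)"

definition ratio :: "(nat \<Rightarrow> real) \<Rightarrow> nat \<Rightarrow> real" where
  "ratio tau k = (if k \<ge> 2 then tau k / tau (k - 1) else 0)"

definition D2 :: "(nat \<Rightarrow> real) \<Rightarrow> (nat \<Rightarrow> nat \<times> nat \<Rightarrow> real) \<Rightarrow> nat \<Rightarrow> nat \<times> nat \<Rightarrow> real" where
  "D2 tau u n p =
     (if n = 1 then (u 1 p - u 0 p) / tau 1
      else (1 + 2 * ratio tau n) / (tau n * (1 + ratio tau n)) * (u n p - u (n - 1) p)
           - (ratio tau n)\<^sup>2 / (tau n * (1 + ratio tau n)) * (u (n - 1) p - u (n - 2) p))"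

definition energy :: "real \<Rightarrow> nat \<Rightarrow> real \<Rightarrow> (nat \<times> nat \<Rightarrow> real) \<Rightarrow> real" where
  "energy L M \<epsilon> v = - (\<epsilon>\<^sup>2 / 2) * (\<Sum>p\<in>grid M. v p * lap_h L M v p)
                      + (1 / 4) * (\<Sum>p\<in>grid M. (1 - (v p)\<^sup>2)\<^sup>2)"

definition mod_energy :: "real \<Rightarrow> nat \<Rightarrow> real \<Rightarrow> (nat \<Rightarrow> real) \<Rightarrow> (nat \<Rightarrow> nat \<times> nat \<Rightarrow> real) \<Rightarrow> nat \<Rightarrow> real" where
  "mod_energy L M \<epsilon> tau u k =
     (if k = 0 then energy L M \<epsilon> (u 0)
      else energy L M \<epsilon> (u k)
        + ratio tau (k + 1) * tau k / (2 * (1 + ratio tau (k + 1)))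
          * (\<Sum>p\<in>grid M. ((u k p - u (k - 1) p) / tau k)\<^sup>2))"

end

theory Submission
  imports Defs
begin

definition sx :: "nat \<Rightarrow> nat \<times> nat \<Rightarrow> nat \<times> nat" where
  "sx M p = ((fst p + 1) mod M, snd p)"
definition sx' :: "nat \<Rightarrow> nat \<times> nat \<Rightarrow> nat \<times> nat" where
  "sx' M p = ((fst p + M - 1) mod M, snd p)"
definition sy :: "nat \<Rightarrow> nat \<times> nat \<Rightarrow> nat \<times> nat" where
  "sy M p = (fst p, (snd p + 1) mod M)"
definition sy' :: "nat \<Rightarrow> nat \<times> nat \<Rightarrow> nat \<times> nat" where
  "sy' M p = (fst p, (snd p + M - 1) mod M)"

lemma mod_fw: fixes i M :: nat assumes "M > 0" "i < M" shows "((i + 1) mod M + M - 1) mod M = i"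
proof -
  have "((i + 1) mod M + M - 1) = ((i + 1) mod M + (M - 1))" using assms by simp
  then have "((i + 1) mod M + M - 1) mod M = ((i + 1) mod M + (M - 1)) mod M" by simp
  also have "\<dots> = (i + 1 + (M - 1)) mod M" by (rule mod_add_left_eq)
  also have "i + 1 + (M - 1) = i + M" using assms by simp
  finally show ?thesis using assms by simp
qed

lemma mod_bw: fixes i M :: nat assumes "M > 0" "i < M" shows "((i + M - 1) mod M + 1) mod M = i"
proof -
  have "((i + M - 1) mod M + 1) mod M = (i + M - 1 + 1) mod M" by (rule mod_add_left_eq)
  also have "i + M - 1 + 1 = i + M" using assms by simp
  finally show ?thesis using assms by simp
qed

lemma mod_fw': fixes i M :: nat assumes "M > 0" "i < M" shows "(Suc i mod M + M - Suc 0) mod M = i"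
  using mod_fw[OF assms] by simp
lemma mod_bw': fixes i M :: nat assumes "M > 0" "i < M" shows "Suc ((i + M - Suc 0) mod M) mod M = i"
  using mod_bw[OF assms] by simp

lemma reindex_x: assumes "M > 0"
  shows "(\<Sum>p\<in>grid M. g (sx M p) p) = (\<Sum>p\<in>grid M. g p (sx' M p))"
  by (rule sum.reindex_bij_witness[of _ "sx' M" "sx M"])
     (auto simp: grid_def sx_def sx'_def mod_fw' mod_bw' assms)

lemma reindex_y: assumes "M > 0"
  shows "(\<Sum>p\<in>grid M. g (sy M p) p) = (\<Sum>p\<in>grid M. g p (sy' M p))"
  by (rule sum.reindex_bij_witness[of _ "sy' M" "sy M"])
     (auto simp: grid_def sy_def sy'_def mod_fw' mod_bw' assms)

lemma sum_zero_helper: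
  fixes f g h :: "'a \<Rightarrow> real"
  assumes "\<And>p. p \<in> A \<Longrightarrow> f p + g p = h p"
  shows "sum f A = sum h A - sum g A"
  using assms by (simp add: sum.distrib[symmetric] sum_subtractf[symmetric] algebra_simps)
    (metis (no_types, lifting) add_diff_cancel_right' sum.cong sum.distrib)

lemma dir_x: fixes x y :: "nat \<times> nat \<Rightarrow> real" assumes "M > 0"
  shows "(\<Sum>p\<in>grid M. x p * (y (sx M p) + y (sx' M p) - 2 * y p))
       = - (\<Sum>p\<in>grid M. (x (sx M p) - x p) * (y (sx M p) - y p))"
proof -
  have h1: "(\<Sum>p\<in>grid M. x (sx M p) * y p) = (\<Sum>p\<in>grid M. x p * y (sx' M p))"
    using reindex_x[OF assms, of "\<lambda>a b. x a * y b"] by simp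
  have h2: "(\<Sum>p\<in>grid M. x (sx M p) * y (sx M p)) = (\<Sum>p\<in>grid M. x p * y p)"
    using reindex_x[OF assms, of "\<lambda>a b. x a * y a"] by simp
  have "(\<Sum>p\<in>grid M. x p * (y (sx M p) + y (sx' M p) - 2 * y p) + (x (sx M p) - x p) * (y (sx M p) - y p))
     = (\<Sum>p\<in>grid M. (x p * y (sx' M p) - x (sx M p) * y p) + (x (sx M p) * y (sx M p) - x p * y p))"
    by (rule sum.cong) (auto simp: algebra_simps)
  also have "\<dots> = 0" using h1 h2 by (simp add: sum.distrib sum_subtractf)
  finally show ?thesis by (simp add: sum.distrib eq_neg_iff_add_eq_0)
qed

lemma dir_y: fixes x y :: "nat \<times> nat \<Rightarrow> real" assumes "M > 0"
  shows "(\<Sum>p\<in>grid M. x p * (y (sy M p) + y (sy' M p) - 2 * y p))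
       = - (\<Sum>p\<in>grid M. (x (sy M p) - x p) * (y (sy M p) - y p))"
proof -
  have h1: "(\<Sum>p\<in>grid M. x (sy M p) * y p) = (\<Sum>p\<in>grid M. x p * y (sy' M p))"
    using reindex_y[OF assms, of "\<lambda>a b. x a * y b"] by simp
  have h2: "(\<Sum>p\<in>grid M. x (sy M p) * y (sy M p)) = (\<Sum>p\<in>grid M. x p * y p)"
    using reindex_y[OF assms, of "\<lambda>a b. x a * y a"] by simp
  have "(\<Sum>p\<in>grid M. x p * (y (sy M p) + y (sy' M p) - 2 * y p) + (x (sy M p) - x p) * (y (sy M p) - y p))
     = (\<Sum>p\<in>grid M. (x p * y (sy' M p) - x (sy M p) * y p) + (x (sy M p) * y (sy M p) - x p * y p))"
    by (rule sum.cong) (auto simp: algebra_simps)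
  also have "\<dots> = 0" using h1 h2 by (simp add: sum.distrib sum_subtractf)
  finally show ?thesis by (simp add: sum.distrib eq_neg_iff_add_eq_0)
qed

definition Qf :: "nat \<Rightarrow> (nat \<times> nat \<Rightarrow> real) \<Rightarrow> (nat \<times> nat \<Rightarrow> real) \<Rightarrow> nat \<times> nat \<Rightarrow> real" where
  "Qf M x y p = (x (sx M p) - x p) * (y (sx M p) - y p) + (x (sy M p) - x p) * (y (sy M p) - y p)"

lemma lap_sum: assumes "M > 0"
  shows "(\<Sum>p\<in>grid M. x p * lap_h L M y p) = - (\<Sum>p\<in>grid M. Qf M x y p) / (L / real M)\<^sup>2"
proof -
  have "(\<Sum>p\<in>grid M. x p * lap_h L M y p)
     = (\<Sum>p\<in>grid M. x p * (y (sx M p) + y (sx' M p) - 2 * y p) + x p * (y (sy M p) + y (sy' M p) - 2 * y p)) / (L / real M)\<^sup>2"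
    unfolding sum_divide_distrib
    by (rule sum.cong) (auto simp: lap_h_def Let_def sx_def sx'_def sy_def sy'_def field_simps)
  also have "\<dots> = - (\<Sum>p\<in>grid M. Qf M x y p) / (L / real M)\<^sup>2"
    by (simp add: sum.distrib dir_x[OF assms] dir_y[OF assms] Qf_def)
  finally show ?thesis .
qed

lemma quad_nonneg:
  fixes a b :: "nat \<times> nat \<Rightarrow> real"
  assumes "M > 0"
  shows "2 * (\<Sum>p\<in>grid M. (a p - b p) * lap_h L M a p)
     \<le> (\<Sum>p\<in>grid M. a p * lap_h L M a p) - (\<Sum>p\<in>grid M. b p * lap_h L M b p)"
proof -
  let ?d = "\<lambda>p. a p - b p"
  have eq: "(\<Sum>p\<in>grid M. a p * lap_h L M a p) - (\<Sum>p\<in>grid M. b p * lap_h L M b p)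
      - 2 * (\<Sum>p\<in>grid M. ?d p * lap_h L M a p)
      = (\<Sum>p\<in>grid M. - Qf M a a p + Qf M b b p + 2 * Qf M ?d a p) / (L / real M)\<^sup>2"
    using lap_sum[OF assms, of a L a] lap_sum[OF assms, of b L b] lap_sum[OF assms, of ?d L a]
    by (simp add: sum.distrib sum_subtractf sum_negf sum_distrib_left diff_divide_distrib add_divide_distrib)
  have "(\<Sum>p\<in>grid M. - Qf M a a p + Qf M b b p + 2 * Qf M ?d a p) \<ge> 0"
  proof (rule sum_nonneg)
    fix p
    have "- Qf M a a p + Qf M b b p + 2 * Qf M ?d a p
       = ((a (sx M p) - a p) - (b (sx M p) - b p))\<^sup>2 + ((a (sy M p) - a p) - (b (sy M p) - b p))\<^sup>2"
      by (simp add: Qf_def power2_eq_square algebra_simps)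
    then show "- Qf M a a p + Qf M b b p + 2 * Qf M ?d a p \<ge> 0" by simp
  qed
  then have "(\<Sum>p\<in>grid M. - Qf M a a p + Qf M b b p + 2 * Qf M ?d a p) / (L / real M)\<^sup>2 \<ge> 0"
    by simp
  with eq show ?thesis by linarith
qed

lemma nonlin_pt:
  fixes a b :: real
  shows "(1 - a\<^sup>2)\<^sup>2 / 4 - (1 - b\<^sup>2)\<^sup>2 / 4 \<le> (a ^ 3 - a) * (a - b) + (a - b)\<^sup>2 / 2"
proof -
  have "(a ^ 3 - a) * (a - b) + (a - b)\<^sup>2 / 2 - ((1 - a\<^sup>2)\<^sup>2 / 4 - (1 - b\<^sup>2)\<^sup>2 / 4)
      = (a - b)\<^sup>2 * (((a + b) / 2)\<^sup>2 + a\<^sup>2 / 2)"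
    by (simp add: power2_eq_square power3_eq_cube field_simps)
  moreover have "(a - b)\<^sup>2 * (((a + b) / 2)\<^sup>2 + a\<^sup>2 / 2) \<ge> 0" by simp
  ultimately show ?thesis by linarith
qed

lemma energy_diff:
  fixes a b :: "nat \<times> nat \<Rightarrow> real"
  assumes "M > 0"
  shows "energy L M \<epsilon> a - energy L M \<epsilon> b \<le>
     - (\<epsilon>\<^sup>2) * (\<Sum>p\<in>grid M. (a p - b p) * lap_h L M a p)
     + (\<Sum>p\<in>grid M. (a p ^ 3 - a p) * (a p - b p)) + (\<Sum>p\<in>grid M. (a p - b p)\<^sup>2) / 2"
proof -
  have q: "2 * (\<Sum>p\<in>grid M. (a p - b p) * lap_h L M a p)
     \<le> (\<Sum>p\<in>grid M. a p * lap_h L M a p) - (\<Sum>p\<in>grid M. b p * lap_h L M b p)"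
    by (rule quad_nonneg[OF assms])
  have e0: "\<epsilon>\<^sup>2 \<ge> 0" by simp
  have q2: "- (\<epsilon>\<^sup>2 / 2) * ((\<Sum>p\<in>grid M. a p * lap_h L M a p) - (\<Sum>p\<in>grid M. b p * lap_h L M b p))
     \<le> - (\<epsilon>\<^sup>2) * (\<Sum>p\<in>grid M. (a p - b p) * lap_h L M a p)"
    using mult_left_mono[OF q e0] by simp
  have n: "(\<Sum>p\<in>grid M. (1 - (a p)\<^sup>2)\<^sup>2 / 4 - (1 - (b p)\<^sup>2)\<^sup>2 / 4)
     \<le> (\<Sum>p\<in>grid M. (a p ^ 3 - a p) * (a p - b p) + (a p - b p)\<^sup>2 / 2)"
    by (rule sum_mono) (rule nonlin_pt)
  have "energy L M \<epsilon> a - energy L M \<epsilon> b =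
     - (\<epsilon>\<^sup>2 / 2) * ((\<Sum>p\<in>grid M. a p * lap_h L M a p) - (\<Sum>p\<in>grid M. b p * lap_h L M b p))
     + (\<Sum>p\<in>grid M. (1 - (a p)\<^sup>2)\<^sup>2 / 4 - (1 - (b p)\<^sup>2)\<^sup>2 / 4)"
    by (simp add: energy_def sum_subtractf sum_divide_distrib[symmetric] algebra_simps)
  also have "\<dots> \<le> - (\<epsilon>\<^sup>2) * (\<Sum>p\<in>grid M. (a p - b p) * lap_h L M a p)
     + (\<Sum>p\<in>grid M. (a p ^ 3 - a p) * (a p - b p) + (a p - b p)\<^sup>2 / 2)"
    using q2 n by linarith
  finally show ?thesis by (simp add: sum.distrib sum_divide_distrib)
qed

theorem theorem3p1:
  fixes L \<epsilon> :: real and M N :: nat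
    and tau :: "nat \<Rightarrow> real" and u :: "nat \<Rightarrow> nat \<times> nat \<Rightarrow> real"
  assumes L_pos: "L > 0" and M_pos: "M > 0" and eps_pos: "\<epsilon> > 0"
    and tau_pos: "\<And>k. k \<ge> 1 \<Longrightarrow> tau k > 0"
    and scheme: "\<And>n p. n \<ge> 1 \<Longrightarrow> p \<in> grid M \<Longrightarrow>
        D2 tau u n p = \<epsilon>\<^sup>2 * lap_h L M (u n) p - ((u n p) ^ 3 - u n p)"
    and ratio_bound: "\<And>k. 2 \<le> k \<Longrightarrow> k \<le> N \<Longrightarrow>
        0 < ratio tau k \<and> ratio tau k < (3 + sqrt 17) / 2"
    and step_bound: "\<And>k. k \<ge> 1 \<Longrightarrow>
        tau k \<le> min ((1 + 2 * ratio tau k) / (1 + ratio tau k))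
                     ((2 + 4 * ratio tau k - (ratio tau k)\<^sup>2) / (1 + ratio tau k)
                       - ratio tau (k + 1) / (1 + ratio tau (k + 1)))"
  shows "\<forall>k. 1 \<le> k \<and> k \<le> N \<longrightarrow> mod_energy L M \<epsilon> tau u k \<le> mod_energy L M \<epsilon> tau u (k - 1)"
proof (intro allI impI)
  fix k assume kk: "1 \<le> k \<and> k \<le> N"
  define a where "a = u k"
  define b where "b = u (k - 1)"
  define T where "T = tau k"
  define r' where "r' = ratio tau (k + 1)"
  define S where "S = (\<Sum>p\<in>grid M. (a p - b p)\<^sup>2)"
  have T0: "T > 0" using tau_pos kk by (simp add: T_def)
  have r'0: "r' > 0" using tau_pos[of "k+1"] tau_pos[of k] kk by (simp add: r'_def ratio_def)
  have nz: "1 + r' \<noteq> 0" "T \<noteq> 0" using T0 r'0 by auto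
  have S0: "S \<ge> 0" unfolding S_def by (rule sum_nonneg) simp
  have ediff: "energy L M \<epsilon> a - energy L M \<epsilon> b \<le> - (\<Sum>p\<in>grid M. D2 tau u k p * (a p - b p)) + S / 2"
  proof -
    have "(\<Sum>p\<in>grid M. D2 tau u k p * (a p - b p))
       = (\<Sum>p\<in>grid M. \<epsilon>\<^sup>2 * ((a p - b p) * lap_h L M a p) - (a p ^ 3 - a p) * (a p - b p))"
    proof (rule sum.cong)
      fix p assume "p \<in> grid M"
      then have "D2 tau u k p = \<epsilon>\<^sup>2 * lap_h L M a p - ((a p) ^ 3 - a p)"
        using scheme[of k p] kk by (simp add: a_def)
      then show "D2 tau u k p * (a p - b p) = \<epsilon>\<^sup>2 * ((a p - b p) * lap_h L M a p) - (a p ^ 3 - a p) * (a p - b p)"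
        by (simp only:) (simp add: algebra_simps)
    qed simp
    also have "\<dots> = \<epsilon>\<^sup>2 * (\<Sum>p\<in>grid M. (a p - b p) * lap_h L M a p) - (\<Sum>p\<in>grid M. (a p ^ 3 - a p) * (a p - b p))"
      by (simp add: sum_subtractf sum_distrib_left)
    finally show ?thesis using energy_diff[OF M_pos, of L \<epsilon> a b] unfolding S_def by linarith
  qed
  have modk: "mod_energy L M \<epsilon> tau u k = energy L M \<epsilon> a + r' / (2 * (1 + r') * T) * S"
  proof -
    have "(\<Sum>p\<in>grid M. ((a p - b p) / T)\<^sup>2) = S / T\<^sup>2"
      by (simp add: S_def power_divide sum_divide_distrib)
    moreover have "mod_energy L M \<epsilon> tau u k = energy L M \<epsilon> a + r' * T / (2 * (1 + r')) * (\<Sum>p\<in>grid M. ((a p - b p) / T)\<^sup>2)"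
      using kk unfolding mod_energy_def a_def b_def T_def r'_def by simp
    moreover have "r' * T / (2 * (1 + r')) * (S / T\<^sup>2) = r' / (2 * (1 + r') * T) * S"
    proof -
      have "1 + r' \<noteq> 0" "T \<noteq> 0" using T0 r'0 by auto
      then show ?thesis by (simp add: power2_eq_square field_simps)
    qed
    ultimately show ?thesis by simp
  qed
  have sb: "T \<le> (2 + 4 * ratio tau k - (ratio tau k)\<^sup>2) / (1 + ratio tau k) - r' / (1 + r')"
    using step_bound[of k] kk by (simp add: T_def r'_def)
  show "mod_energy L M \<epsilon> tau u k \<le> mod_energy L M \<epsilon> tau u (k - 1)"
  proof (cases "k = 1")
    case True
    have r1: "ratio tau k = 0" using True by (simp add: ratio_def)
    have sb1: "T \<le> 2 - r' / (1 + r')" using sb r1 by simp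
    have dsum: "(\<Sum>p\<in>grid M. D2 tau u k p * (a p - b p)) = S / T"
      unfolding S_def sum_divide_distrib
      by (rule sum.cong) (auto simp: D2_def True a_def b_def T_def power2_eq_square)
    have m0: "mod_energy L M \<epsilon> tau u (k - 1) = energy L M \<epsilon> b"
      using True by (simp add: mod_energy_def b_def)
    have coef: "- 1 / T + 1 / 2 + r' / (2 * (1 + r') * T) \<le> 0"
    proof -
      have e1: "r' / (2 * (1 + r') * T) * (2 * T) = r' / (1 + r')"
      proof -
        have "r' / (2 * (1 + r') * T) * (2 * T) = (r' * (2 * T)) / ((1 + r') * (2 * T))"
          by (simp add: ac_simps)
        also have "\<dots> = r' / (1 + r')" using nz by simp
        finally show ?thesis .
      qed
      have "(- 1 / T + 1 / 2 + r' / (2 * (1 + r') * T)) * (2 * T) = -2 + T + r' / (1 + r')"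
        using nz e1 by (simp add: ring_distribs)
      also have "\<dots> \<le> 0" using sb1 by simp
      finally show ?thesis using T0 by (simp add: mult_le_0_iff)
    qed
    have "energy L M \<epsilon> a - energy L M \<epsilon> b + r' / (2 * (1 + r') * T) * S
        \<le> (- 1 / T + 1 / 2 + r' / (2 * (1 + r') * T)) * S"
    proof -
      have "energy L M \<epsilon> a - energy L M \<epsilon> b \<le> - (S / T) + S / 2" using ediff dsum by linarith
      moreover have "(- 1 / T + 1 / 2 + r' / (2 * (1 + r') * T)) * S = - (S / T) + S / 2 + r' / (2 * (1 + r') * T) * S"
        by (simp add: algebra_simps)
      ultimately show ?thesis by linarith
    qed
    also have "\<dots> \<le> 0" using coef S0 by (simp add: mult_le_0_iff)
    finally show ?thesis using modk m0 by linarith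
  next
    case False
    with kk have k2: "k \<ge> 2" by simp
    define r where "r = ratio tau k"
    define T0' where "T0' = tau (k - 1)"
    define c where "c = u (k - 2)"
    define P where "P = (\<Sum>p\<in>grid M. (b p - c p)\<^sup>2)"
    define X where "X = (\<Sum>p\<in>grid M. (b p - c p) * (a p - b p))"
    define c1 where "c1 = (1 + 2 * r) / (T * (1 + r))"
    define c2 where "c2 = r\<^sup>2 / (T * (1 + r))"
    have T00: "T0' > 0" using tau_pos[of "k-1"] k2 by (simp add: T0'_def)
    have rdef: "r = T / T0'" using k2 by (simp add: r_def ratio_def T_def T0'_def)
    have r0: "r > 0" using rdef T0 T00 by simp
    have nz2: "1 + r \<noteq> 0" "T0' \<noteq> 0" using r0 T00 by auto
    have c20: "c2 \<ge> 0" using r0 T0 by (simp add: c2_def)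
    have dsum: "(\<Sum>p\<in>grid M. D2 tau u k p * (a p - b p)) = c1 * S - c2 * X"
    proof -
      have "(\<Sum>p\<in>grid M. D2 tau u k p * (a p - b p)) = (\<Sum>p\<in>grid M. c1 * (a p - b p)\<^sup>2 - c2 * ((b p - c p) * (a p - b p)))"
      proof (rule sum.cong)
        fix p
        have "D2 tau u k p = c1 * (a p - b p) - c2 * (b p - c p)"
          using False by (simp add: D2_def c1_def c2_def r_def T_def a_def b_def c_def)
        then show "D2 tau u k p * (a p - b p) = c1 * (a p - b p)\<^sup>2 - c2 * ((b p - c p) * (a p - b p))"
          by (simp only:) (simp add: power2_eq_square algebra_simps)
      qed simp
      then show ?thesis by (simp add: S_def X_def sum_subtractf sum_distrib_left)
    qed
    have XP: "X \<le> (P + S) / 2"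
    proof -
      have "X \<le> (\<Sum>p\<in>grid M. ((b p - c p)\<^sup>2 + (a p - b p)\<^sup>2) / 2)"
        unfolding X_def
      proof (rule sum_mono)
        fix p
        have "0 \<le> ((b p - c p) - (a p - b p))\<^sup>2" by simp
        then show "(b p - c p) * (a p - b p) \<le> ((b p - c p)\<^sup>2 + (a p - b p)\<^sup>2) / 2"
          by (simp add: power2_eq_square algebra_simps)
      qed
      then show ?thesis by (simp add: P_def S_def sum.distrib sum_divide_distrib[symmetric])
    qed
    have modk1: "mod_energy L M \<epsilon> tau u (k - 1) = energy L M \<epsilon> b + c2 / 2 * P"
    proof -
      have kk1: "k - 1 + 1 = k" "k - 1 - 1 = k - 2" "k - 1 \<noteq> 0" using k2 by auto
      have "(\<Sum>p\<in>grid M. ((b p - c p) / T0')\<^sup>2) = P / T0'\<^sup>2"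
        by (simp add: P_def power_divide sum_divide_distrib)
      then have "mod_energy L M \<epsilon> tau u (k - 1) = energy L M \<epsilon> b + r * T0' / (2 * (1 + r)) * (P / T0'\<^sup>2)"
        unfolding mod_energy_def using kk1 by (simp add: b_def c_def r_def T0'_def)
      also have "r * T0' / (2 * (1 + r)) * (P / T0'\<^sup>2) = c2 / 2 * P"
        proof -
        have Tr: "T = r * T0'" using rdef nz2 by simp
        have "r \<noteq> 0" using r0 by simp
        moreover define q where "q = 1 + r"
        moreover have "q \<noteq> 0" using nz2 q_def by simp
        ultimately show ?thesis using nz2 unfolding c2_def Tr q_def[symmetric] by (simp add: power2_eq_square field_simps)
      qed
      finally show ?thesis .
    qed
    have coef: "- c1 + c2 / 2 + 1 / 2 + r' / (2 * (1 + r') * T) \<le> 0"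
    proof -
      have "(- c1 + c2 / 2 + 1 / 2 + r' / (2 * (1 + r') * T)) * (2 * T)
          = T - (2 + 4 * r - r\<^sup>2) / (1 + r) + r' / (1 + r')"
      proof -
        define q where "q = 1 + r"
        define q' where "q' = 1 + r'"
        have "q \<noteq> 0" "q' \<noteq> 0" using nz nz2 q_def q'_def by auto
        then show ?thesis using nz nz2 unfolding c1_def c2_def q_def[symmetric] q'_def[symmetric]
          by (simp add: field_simps power2_eq_square)
      qed
      also have "\<dots> \<le> 0" using sb by (simp add: r_def)
      finally show ?thesis using T0 by (simp add: mult_le_0_iff)
    qed
    have "energy L M \<epsilon> a - energy L M \<epsilon> b + r' / (2 * (1 + r') * T) * S
        \<le> - (c1 * S - c2 * X) + S / 2 + r' / (2 * (1 + r') * T) * S"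
      using ediff dsum by simp
    also have "\<dots> \<le> - c1 * S + c2 * ((P + S) / 2) + S / 2 + r' / (2 * (1 + r') * T) * S"
      using mult_left_mono[OF XP c20] by simp
    also have "\<dots> = (- c1 + c2 / 2 + 1 / 2 + r' / (2 * (1 + r') * T)) * S + c2 / 2 * P"
      by (simp add: algebra_simps)
    also have "\<dots> \<le> c2 / 2 * P" using coef S0 by (simp add: mult_le_0_iff)
    finally show ?thesis using modk modk1 by linarith
  qed
qed

end
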